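(* Assume $\omega$ satisfies $(\mathbf{TC})_{C,g}$ or $(\mathbf{TCG})_{C,g}$. For each $N\in\mathbb{N}$ and $T>0$, \[ \mathbb{E}\big[\|(W^{\beta,\omega}_N)^{-1}\|_T^2\big]<\infty\qquad\text{and}\qquad\mathbb{E}\Big[\Big\|\frac{\partial}{\partial\beta}\log W^{\beta,\omega}_N\Big\|_T^2\Big]<\infty, \] where the norms are taken in the variable $\beta$.
   Context: Fix $d\ge3$; $(S_n)$ is a random walk on $\mathbb{Z}^d$ with i.i.d. bounded increments, law $P^S_0$, expectation $E^S_0$. Independently, $\omega=(\omega_{n,z})_{(n,z)\in\mathbb{N}\times\mathbb{Z}^d}$ is a Markovian random field with law $\mathbb{P}$ (expectation $\mathbb{E}$), $\mathbb{E}[e^{\beta\omega_{n,z}}]<\infty$ for all real $\beta$ (Markovian: conditional law of $(\omega_v)_{v\in V}$ given $\mathscr{F}_{V^c}$ equals that given $\mathscr{F}_{\partial V}$, $\mathscr{F}_\Lambda=\sigma(\omega_v:v\in\Lambda)$). $d_1(A,B)=\inf\{|x-y|_1+|m-k|:(m,x)\in A,(k,y)\in B\}$. $(\mathbf{TC})_{C,g}$: for finite $\Delta\subseteq V$ with $d_1(\Delta,V^c)>1$ and $A\subseteq V^c$, the Radon–Nikodym derivative of the conditional law of $(\omega_v)_{v\in\Delta}$ given $\omega|_{V^c}=\eta$ w.r.t. that given $\omega|_{V^c}=\eta'$ is at most $\exp(C\sum_{(m,x)\in\partial\Delta,(k,y)\in\partial A}e^{-g|x-y|_1-g|m-k|})$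 whenever $\eta,\eta'\in[0,\infty)^{\mathbb{N}\times\mathbb{Z}^d}$ agree on $V^c\setminus A$; $(\mathbf{TCG})_{C,g}$: same with sum over $(m,x)\in\Delta,(k,y)\in A$. $Z^{\beta,\omega}_N=E^S_0[\exp(\beta\sum_{k=1}^N\omega_{k,S_k})]$ and $W^{\beta,\omega}_N=Z^{\beta,\omega}_N/\mathbb{E}[Z^{\beta,\omega}_N]$. For a Borel function $f$ of $\beta$ and $T>0$, $\|f\|_T=\operatorname{ess\,sup}\{|f(\beta)|:0\le\beta\le T\}$. *)

theory Defs
  imports "HOL-Probability.Probability"
begin

text \<open>Space-time sites (n,z) in N x Z^d; the dimension d is CARD('d).\<close>
type_synonym 'd site = "nat \<times> (int ^ 'd)"
type_synonym 'd config = "'d site \<Rightarrow> real"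

definition l1norm :: "int ^ 'd \<Rightarrow> int" where
  "l1norm x = (\<Sum>i\<in>UNIV. \<bar>x $ i\<bar>)"

definition site_dist :: "('d::finite) site \<Rightarrow> 'd site \<Rightarrow> nat" where
  "site_dist u v = nat (l1norm (snd u - snd v)) + nat \<bar>int (fst u) - int (fst v)\<bar>"

text \<open>d_1(A,B) as an infimum (= infinity if A or B is empty).\<close>
definition d1 :: "('d::finite) site set \<Rightarrow> 'd site set \<Rightarrow> enat" where
  "d1 A B = (INF p \<in> A \<times> B. enat (site_dist (fst p) (snd p)))"

definition bdry :: "('d::finite) site set \<Rightarrow> 'd site set" where
  "bdry V = {v. v \<notin> V \<and> (\<exists>u\<in>V. site_dist u v = 1)}"

definition Omega :: "'d config measure" where
  "Omega = PiM UNIV (\<lambda>_. borel)"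

definition FF :: "'d site set \<Rightarrow> 'd config measure" where
  "FF L = vimage_algebra (space Omega) (\<lambda>\<omega>. restrict \<omega> L) (PiM L (\<lambda>_. borel))"

definition markov_field :: "('d::finite) config measure \<Rightarrow> bool" where
  "markov_field P \<longleftrightarrow>
     (\<forall>V. \<forall>B \<in> sets (PiM V (\<lambda>_. borel :: real measure)).
        AE \<omega> in P. real_cond_exp P (FF (- V)) (indicator ((\<lambda>\<omega>. restrict \<omega> V) -` B)) \<omega>
                 = real_cond_exp P (FF (bdry V)) (indicator ((\<lambda>\<omega>. restrict \<omega> V) -` B)) \<omega>)"

text \<open>K V eta is (a version of) the conditional law of omega given omega restricted to V^c = eta.\<close>
definition cond_law_family ::
  "'d config measure \<Rightarrow> ('d site set \<Rightarrow> 'd config \<Rightarrow> 'd config measure) \<Rightarrow> bool" where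
  "cond_law_family P K \<longleftrightarrow>
     (\<forall>V \<eta>. prob_space (K V \<eta>) \<and> sets (K V \<eta>) = sets Omega) \<and>
     (\<forall>V. \<forall>B \<in> sets Omega. (\<lambda>\<eta>. emeasure (K V \<eta>) B) \<in> borel_measurable (FF (- V))) \<and>
     (\<forall>V. \<forall>B \<in> sets Omega. \<forall>E \<in> sets (FF (- V)).
        emeasure P (B \<inter> E) = (\<integral>\<^sup>+ \<eta>. indicator E \<eta> * emeasure (K V \<eta>) B \<partial>P))"

definition cond_law_on ::
  "('d site set \<Rightarrow> 'd config \<Rightarrow> 'd config measure) \<Rightarrow> 'd site set \<Rightarrow> 'd site set \<Rightarrow> 'd config
    \<Rightarrow> ('d site \<Rightarrow> real) measure" where
  "cond_law_on K V \<Delta> \<eta> = distr (K V \<eta>) (PiM \<Delta> (\<lambda>_. borel)) (\<lambda>\<omega>. restrict \<omega> \<Delta>)"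

definition decay_sum :: "real \<Rightarrow> ('d::finite) site set \<Rightarrow> 'd site set \<Rightarrow> real" where
  "decay_sum g X Y = (\<Sum>\<^sub>\<infinity>(u, v) \<in> X \<times> Y.
      exp (- g * real_of_int (l1norm (snd u - snd v)) - g * \<bar>real (fst u) - real (fst v)\<bar>))"

definition TC_gen ::
  "(('d::finite) site set \<Rightarrow> 'd site set \<Rightarrow> real) \<Rightarrow>
   ('d site set \<Rightarrow> 'd config \<Rightarrow> 'd config measure) \<Rightarrow> bool" where
  "TC_gen bound K \<longleftrightarrow>
     (\<forall>V \<Delta> A \<eta> \<eta>'. finite \<Delta> \<and> \<Delta> \<subseteq> V \<and> d1 \<Delta> (- V) > 1 \<and> A \<subseteq> - V \<and>
        (\<forall>v. 0 \<le> \<eta> v) \<and> (\<forall>v. 0 \<le> \<eta>' v) \<and> (\<forall>v \<in> - V - A. \<eta> v = \<eta>' v) \<longrightarrow>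
        absolutely_continuous (cond_law_on K V \<Delta> \<eta>') (cond_law_on K V \<Delta> \<eta>) \<and>
        (AE z in cond_law_on K V \<Delta> \<eta>'.
            RN_deriv (cond_law_on K V \<Delta> \<eta>') (cond_law_on K V \<Delta> \<eta>) z
              \<le> ennreal (exp (bound \<Delta> A))))"

definition TC :: "real \<Rightarrow> real \<Rightarrow> (('d::finite) site set \<Rightarrow> 'd config \<Rightarrow> 'd config measure) \<Rightarrow> bool" where
  "TC C g K = TC_gen (\<lambda>\<Delta> A. C * decay_sum g (bdry \<Delta>) (bdry A)) K"

definition TCG :: "real \<Rightarrow> real \<Rightarrow> (('d::finite) site set \<Rightarrow> 'd config \<Rightarrow> 'd config measure) \<Rightarrow> bool" where
  "TCG C g K = TC_gen (\<lambda>\<Delta> A. C * decay_sum g \<Delta> A) K"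

definition Zpart :: "(int ^ ('d::finite)) pmf \<Rightarrow> nat \<Rightarrow> real \<Rightarrow> 'd config \<Rightarrow> real" where
  "Zpart \<mu> N \<beta> \<omega> = measure_pmf.expectation (Pi_pmf {1..N} 0 (\<lambda>_. \<mu>))
      (\<lambda>X. exp (\<beta> * (\<Sum>k = 1..N. \<omega> (k, \<Sum>j = 1..k. X j))))"

definition Wpart :: "(int ^ ('d::finite)) pmf \<Rightarrow> 'd config measure \<Rightarrow> nat \<Rightarrow> real \<Rightarrow> 'd config \<Rightarrow> real" where
  "Wpart \<mu> P N \<beta> \<omega> = Zpart \<mu> N \<beta> \<omega> / (\<integral>\<omega>'. Zpart \<mu> N \<beta> \<omega>' \<partial>P)"

definition tnorm :: "real \<Rightarrow> (real \<Rightarrow> real) \<Rightarrow> ereal" where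
  "tnorm T f = esssup (restrict_space lborel {0..T}) (\<lambda>\<beta>. ereal \<bar>f \<beta>\<bar>)"

end

theory Submission
  imports Defs
begin

lemma exp_diff_bound:
  fixes a b :: real
  shows "\<bar>exp a - exp b\<bar> \<le> \<bar>a - b\<bar> * exp (max a b)"
proof -
  have key: "exp x - exp y \<le> (x - y) * exp x" if "y \<le> x" for x y :: real
  proof -
    have "1 + (y - x) \<le> exp (y - x)" by (rule exp_ge_add_one_self)
    hence "exp x * (1 + (y - x)) \<le> exp x * exp (y - x)" by simp
    also have "exp x * exp (y - x) = exp y" by (simp add: exp_add[symmetric])
    finally show ?thesis by (simp add: algebra_simps)
  qed
  show ?thesis
  proof (cases "b \<le> a")
    case True
    with key[OF True] show ?thesis by (simp add: max_def)
  next
    case False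
    with key[of a b] show ?thesis by (simp add: max_def abs_if)
  qed
qed

lemma quot_bound:
  fixes b t y :: real
  assumes "t \<noteq> 0"
  shows "\<bar>(exp ((b + t) * y) - exp (b * y)) / t\<bar> \<le> \<bar>y\<bar> * exp ((\<bar>b\<bar> + \<bar>t\<bar>) * \<bar>y\<bar>)"
proof -
  have "\<bar>exp ((b + t) * y) - exp (b * y)\<bar> \<le> \<bar>(b + t) * y - b * y\<bar> * exp (max ((b + t) * y) (b * y))"
    by (rule exp_diff_bound)
  also have "\<dots> \<le> \<bar>t\<bar> * \<bar>y\<bar> * exp ((\<bar>b\<bar> + \<bar>t\<bar>) * \<bar>y\<bar>)"
  proof -
    have "\<bar>(b + t) * y - b * y\<bar> = \<bar>t\<bar> * \<bar>y\<bar>" by (simp add: algebra_simps abs_mult)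
    moreover have "max ((b + t) * y) (b * y) \<le> (\<bar>b\<bar> + \<bar>t\<bar>) * \<bar>y\<bar>"
    proof -
      have "(b + t) * y \<le> \<bar>(b+t) * y\<bar>" by simp
      also have "\<dots> \<le> (\<bar>b\<bar> + \<bar>t\<bar>) * \<bar>y\<bar>" by (simp add: abs_mult mult_right_mono abs_triangle_ineq)
      finally have 1: "(b + t) * y \<le> (\<bar>b\<bar> + \<bar>t\<bar>) * \<bar>y\<bar>" .
      have "b * y \<le> \<bar>b\<bar> * \<bar>y\<bar>" by (metis abs_ge_self abs_mult)
      also have "\<dots> \<le> (\<bar>b\<bar> + \<bar>t\<bar>) * \<bar>y\<bar>" by (simp add: mult_right_mono)
      finally show ?thesis using 1 by simp
    qed
    ultimately show ?thesis by (simp add: mult_left_mono)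
  qed
  finally show ?thesis using assms by (simp add: abs_divide divide_le_eq mult_ac)
qed

lemma laplace_deriv:
  fixes h :: "'a \<Rightarrow> real"
  assumes hm[measurable]: "h \<in> borel_measurable M"
    and int: "\<And>c. integrable M (\<lambda>w. exp (c * \<bar>h w\<bar>))"
  shows "((\<lambda>b. \<integral>w. exp (b * h w) \<partial>M) has_field_derivative (\<integral>w. h w * exp (b0 * h w) \<partial>M)) (at b0)"
proof -
  have intexp: "integrable M (\<lambda>w. exp (b * h w))" for b
  proof (rule Bochner_Integration.integrable_bound[OF int[of "\<bar>b\<bar>"]])
    show "(\<lambda>w. exp (b * h w)) \<in> borel_measurable M" by measurable
    show "AE w in M. norm (exp (b * h w)) \<le> norm (exp (\<bar>b\<bar> * \<bar>h w\<bar>))"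
      by (auto simp: abs_mult[symmetric])
  qed
  have bnd: "\<bar>y\<bar> * exp (c * \<bar>y\<bar>) \<le> exp ((c + 1) * \<bar>y\<bar>)" for c y :: real
  proof -
    have "\<bar>y\<bar> \<le> exp \<bar>y\<bar>" using exp_ge_add_one_self[of "\<bar>y\<bar>"] by linarith
    hence "\<bar>y\<bar> * exp (c * \<bar>y\<bar>) \<le> exp \<bar>y\<bar> * exp (c * \<bar>y\<bar>)" by (simp add: mult_right_mono)
    also have "\<dots> = exp ((c + 1) * \<bar>y\<bar>)" by (simp add: exp_add[symmetric] algebra_simps)
    finally show ?thesis .
  qed
  show ?thesis
    unfolding DERIV_def tendsto_at_iff_sequentially
  proof (intro allI impI)
    fix X :: "nat \<Rightarrow> real"
    assume X0: "\<forall>i. X i \<in> UNIV - {0}" and Xl: "X \<longlonglongrightarrow> 0"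
    from Xl have "Bseq X" by (rule convergent_imp_Bseq[OF convergentI])
    then obtain B where B: "B > 0" "\<And>i. norm (X i) \<le> B" by (auto simp: Bseq_def)
    have eq: "((\<lambda>t. ((\<integral>w. exp ((b0 + t) * h w) \<partial>M) - (\<integral>w. exp (b0 * h w) \<partial>M)) / t) \<circ> X) i
       = (\<integral>w. (exp ((b0 + X i) * h w) - exp (b0 * h w)) / X i \<partial>M)" for i
      using intexp by (simp add: integral_diff[symmetric])
    show "((\<lambda>t. ((\<integral>w. exp ((b0 + t) * h w) \<partial>M) - (\<integral>w. exp (b0 * h w) \<partial>M)) / t) \<circ> X)
        \<longlonglongrightarrow> (\<integral>w. h w * exp (b0 * h w) \<partial>M)"
      unfolding eq
    proof (rule integral_dominated_convergence[where w="\<lambda>w. exp ((\<bar>b0\<bar> + B + 1) * \<bar>h w\<bar>)"])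
      show "(\<lambda>w. h w * exp (b0 * h w)) \<in> borel_measurable M" by measurable
      show "(\<lambda>w. (exp ((b0 + X i) * h w) - exp (b0 * h w)) / X i) \<in> borel_measurable M" for i
        by measurable
      show "integrable M (\<lambda>w. exp ((\<bar>b0\<bar> + B + 1) * \<bar>h w\<bar>))" by (rule int)
      show "AE w in M. (\<lambda>i. (exp ((b0 + X i) * h w) - exp (b0 * h w)) / X i) \<longlonglongrightarrow> h w * exp (b0 * h w)"
      proof (rule AE_I2)
        fix w
        have d: "((\<lambda>b. exp (b * h w)) has_field_derivative (h w * exp (b0 * h w))) (at b0)"
          by (auto intro!: derivative_eq_intros)
        from d[unfolded DERIV_def tendsto_at_iff_sequentially] X0 Xl
        show "(\<lambda>i. (exp ((b0 + X i) * h w) - exp (b0 * h w)) / X i) \<longlonglongrightarrow> h w * exp (b0 * h w)"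
          by (auto simp: o_def)
      qed
      show "AE w in M. norm ((exp ((b0 + X i) * h w) - exp (b0 * h w)) / X i) \<le> exp ((\<bar>b0\<bar> + B + 1) * \<bar>h w\<bar>)" for i
      proof (rule AE_I2)
        fix w
        have "X i \<noteq> 0" using X0 by auto
        hence "\<bar>(exp ((b0 + X i) * h w) - exp (b0 * h w)) / X i\<bar> \<le> \<bar>h w\<bar> * exp ((\<bar>b0\<bar> + \<bar>X i\<bar>) * \<bar>h w\<bar>)"
          by (rule quot_bound)
        also have "\<dots> \<le> \<bar>h w\<bar> * exp ((\<bar>b0\<bar> + B) * \<bar>h w\<bar>)"
          using B(2)[of i] by (auto intro!: mult_left_mono mult_right_mono)
        also have "\<dots> \<le> exp ((\<bar>b0\<bar> + B + 1) * \<bar>h w\<bar>)" by (rule bnd)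
        finally show "norm ((exp ((b0 + X i) * h w) - exp (b0 * h w)) / X i) \<le> exp ((\<bar>b0\<bar> + B + 1) * \<bar>h w\<bar>)"
          by simp
      qed
    qed
  qed
qed


locale lapl =
  fixes P :: "'w measure" and S :: "'x set" and p :: "'x \<Rightarrow> real"
    and h :: "'x \<Rightarrow> 'w \<Rightarrow> real" and A :: "'w \<Rightarrow> real"
  assumes prob: "prob_space P" and finS: "finite S"
    and pnn: "\<And>x. x \<in> S \<Longrightarrow> 0 \<le> p x" and psum: "(\<Sum>x\<in>S. p x) = 1"
    and hm[measurable]: "\<And>x. x \<in> S \<Longrightarrow> h x \<in> borel_measurable P"
    and Am[measurable]: "A \<in> borel_measurable P"
    and Ann: "\<And>w. 0 \<le> A w"
    and hA: "\<And>x w. x \<in> S \<Longrightarrow> \<bar>h x w\<bar> \<le> A w"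
    and Aint: "\<And>c. 0 \<le> c \<Longrightarrow> integrable P (\<lambda>w. exp (c * A w))"
begin

definition "Z b w = (\<Sum>x\<in>S. p x * exp (b * h x w))"
definition "Z' b w = (\<Sum>x\<in>S. p x * (h x w * exp (b * h x w)))"
definition "m b = (\<integral>w. Z b w \<partial>P)"
definition "m' b = (\<integral>w. Z' b w \<partial>P)"

lemma int_habs: "x \<in> S \<Longrightarrow> integrable P (\<lambda>w. exp (c * \<bar>h x w\<bar>))"
proof (rule Bochner_Integration.integrable_bound[OF Aint[of "\<bar>c\<bar>"]])
  assume x: "x \<in> S"
  show "(\<lambda>w. exp (c * \<bar>h x w\<bar>)) \<in> borel_measurable P" using x by measurable
  show "AE w in P. norm (exp (c * \<bar>h x w\<bar>)) \<le> norm (exp (\<bar>c\<bar> * A w))"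
  proof (rule AE_I2)
    fix w
    have "c * \<bar>h x w\<bar> \<le> \<bar>c\<bar> * \<bar>h x w\<bar>" by (simp add: mult_right_mono)
    also have "\<dots> \<le> \<bar>c\<bar> * A w" using hA[OF x] by (simp add: mult_left_mono)
    finally show "norm (exp (c * \<bar>h x w\<bar>)) \<le> norm (exp (\<bar>c\<bar> * A w))" by simp
  qed
qed simp

lemma int_exp: "x \<in> S \<Longrightarrow> integrable P (\<lambda>w. exp (b * h x w))"
proof (rule Bochner_Integration.integrable_bound[OF int_habs[of x "\<bar>b\<bar>"]])
  assume x: "x \<in> S"
  show "(\<lambda>w. exp (b * h x w)) \<in> borel_measurable P" using x by measurable
  show "AE w in P. norm (exp (b * h x w)) \<le> norm (exp (\<bar>b\<bar> * \<bar>h x w\<bar>))"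
    by (auto simp: abs_mult[symmetric])
qed

lemma bnd1: "\<bar>y\<bar> * exp (c * \<bar>y\<bar>) \<le> exp ((c + 1) * \<bar>y\<bar>)" for c y :: real
proof -
  have "\<bar>y\<bar> \<le> exp \<bar>y\<bar>" using exp_ge_add_one_self[of "\<bar>y\<bar>"] by linarith
  hence "\<bar>y\<bar> * exp (c * \<bar>y\<bar>) \<le> exp \<bar>y\<bar> * exp (c * \<bar>y\<bar>)" by (simp add: mult_right_mono)
  also have "\<dots> = exp ((c + 1) * \<bar>y\<bar>)" by (simp add: exp_add[symmetric] algebra_simps)
  finally show ?thesis .
qed

lemma int_hexp: "x \<in> S \<Longrightarrow> integrable P (\<lambda>w. h x w * exp (b * h x w))"
proof (rule Bochner_Integration.integrable_bound[OF int_habs[of x "\<bar>b\<bar> + 1"]])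
  assume x: "x \<in> S"
  show "(\<lambda>w. h x w * exp (b * h x w)) \<in> borel_measurable P" using x by measurable
  show "AE w in P. norm (h x w * exp (b * h x w)) \<le> norm (exp ((\<bar>b\<bar> + 1) * \<bar>h x w\<bar>))"
  proof (rule AE_I2)
    fix w
    have "\<bar>h x w * exp (b * h x w)\<bar> \<le> \<bar>h x w\<bar> * exp (\<bar>b\<bar> * \<bar>h x w\<bar>)"
      by (auto simp: abs_mult intro!: mult_left_mono) (metis abs_ge_self abs_mult)
    also have "\<dots> \<le> exp ((\<bar>b\<bar> + 1) * \<bar>h x w\<bar>)" by (rule bnd1)
    finally show "norm (h x w * exp (b * h x w)) \<le> norm (exp ((\<bar>b\<bar> + 1) * \<bar>h x w\<bar>))" by simp
  qed
qed

lemma Z_meas[measurable]: "Z b \<in> borel_measurable P"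
  unfolding Z_def by (intro borel_measurable_sum) measurable

lemma Z'_meas[measurable]: "Z' b \<in> borel_measurable P"
  unfolding Z'_def by (intro borel_measurable_sum) measurable

lemma intZ: "integrable P (Z b)"
  unfolding Z_def by (intro Bochner_Integration.integrable_sum integrable_mult_right int_exp)

lemma intZ': "integrable P (Z' b)"
  unfolding Z'_def by (intro Bochner_Integration.integrable_sum integrable_mult_right int_hexp)

lemma m_eq: "m b = (\<Sum>x\<in>S. p x * (\<integral>w. exp (b * h x w) \<partial>P))"
  unfolding m_def Z_def
  by (subst Bochner_Integration.integral_sum) (auto intro!: integrable_mult_right int_exp)

lemma m'_eq: "m' b = (\<Sum>x\<in>S. p x * (\<integral>w. h x w * exp (b * h x w) \<partial>P))"
  unfolding m'_def Z'_def
  by (subst Bochner_Integration.integral_sum) (auto intro!: integrable_mult_right int_hexp)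

lemma m_deriv: "(m has_field_derivative m' b) (at b)"
proof -
  have "((\<lambda>b. \<Sum>x\<in>S. p x * (\<integral>w. exp (b * h x w) \<partial>P)) has_field_derivative
          (\<Sum>x\<in>S. p x * (\<integral>w. h x w * exp (b * h x w) \<partial>P))) (at b)"
    by (intro DERIV_sum DERIV_cmult laplace_deriv hm int_habs)
  thus ?thesis by (simp add: m_eq[abs_def] m'_eq)
qed

lemma Z_deriv: "((\<lambda>b. Z b w) has_field_derivative Z' b w) (at b)"
  unfolding Z_def Z'_def
  by (auto intro!: derivative_eq_intros DERIV_sum simp: mult_ac)

lemma Z_lower: "exp (- (\<bar>b\<bar> * A w)) \<le> Z b w"
proof -
  have "exp (- (\<bar>b\<bar> * A w)) = (\<Sum>x\<in>S. p x * exp (- (\<bar>b\<bar> * A w)))"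
    by (simp add: sum_distrib_right[symmetric] psum)
  also have "\<dots> \<le> Z b w" unfolding Z_def
  proof (intro sum_mono mult_left_mono pnn)
    fix x assume x: "x \<in> S"
    have "\<bar>b * h x w\<bar> \<le> \<bar>b\<bar> * A w" using hA[OF x] by (simp add: abs_mult mult_left_mono)
    thus "exp (- (\<bar>b\<bar> * A w)) \<le> exp (b * h x w)" by simp
  qed
  finally show ?thesis .
qed

lemma Z_upper: "Z b w \<le> exp (\<bar>b\<bar> * A w)"
proof -
  have "Z b w \<le> (\<Sum>x\<in>S. p x * exp (\<bar>b\<bar> * A w))" unfolding Z_def
  proof (intro sum_mono mult_left_mono pnn)
    fix x assume x: "x \<in> S"
    have "\<bar>b * h x w\<bar> \<le> \<bar>b\<bar> * A w" using hA[OF x] by (simp add: abs_mult mult_left_mono)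
    thus "exp (b * h x w) \<le> exp (\<bar>b\<bar> * A w)" by simp
  qed
  also have "\<dots> = exp (\<bar>b\<bar> * A w)" by (simp add: sum_distrib_right[symmetric] psum)
  finally show ?thesis .
qed

lemma Z_pos: "0 < Z b w"
  using Z_lower[of b w] by (meson exp_gt_zero less_le_trans)

lemma Z'_bound: "\<bar>Z' b w\<bar> \<le> A w * Z b w"
proof -
  have "\<bar>Z' b w\<bar> \<le> (\<Sum>x\<in>S. \<bar>p x * (h x w * exp (b * h x w))\<bar>)" unfolding Z'_def
    by (rule sum_abs)
  also have "\<dots> \<le> (\<Sum>x\<in>S. A w * (p x * exp (b * h x w)))"
  proof (intro sum_mono)
    fix x assume x: "x \<in> S"
    have "\<bar>p x * (h x w * exp (b * h x w))\<bar> = p x * (\<bar>h x w\<bar> * exp (b * h x w))"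
      using pnn[OF x] by (simp add: abs_mult)
    also have "\<dots> \<le> p x * (A w * exp (b * h x w))"
      using pnn[OF x] hA[OF x] by (intro mult_left_mono mult_right_mono) auto
    finally show "\<bar>p x * (h x w * exp (b * h x w))\<bar> \<le> A w * (p x * exp (b * h x w))"
      by (simp add: mult_ac)
  qed
  also have "\<dots> = A w * Z b w" unfolding Z_def by (simp add: sum_distrib_left)
  finally show ?thesis .
qed

lemma int_pos: "0 < (\<integral>w. exp (c * A w) \<partial>P)"
proof -
  interpret prob_space P by (rule prob)
  have i: "integrable P (\<lambda>w. exp (c * A w))"
  proof (cases "0 \<le> c")
    case True thus ?thesis by (rule Aint)
  next
    case False
    show ?thesis
    proof (rule Bochner_Integration.integrable_bound[OF integrable_const[of 1]])
      show "(\<lambda>w. exp (c * A w)) \<in> borel_measurable P" by measurable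
      show "AE w in P. norm (exp (c * A w)) \<le> norm (1::real)"
        using False Ann by (auto intro!: AE_I2 simp: mult_nonpos_nonneg)
    qed
  qed
  have "0 \<le> (\<integral>w. exp (c * A w) \<partial>P)" by (simp add: integral_nonneg_AE)
  moreover have "(\<integral>w. exp (c * A w) \<partial>P) \<noteq> 0"
  proof
    assume "(\<integral>w. exp (c * A w) \<partial>P) = 0"
    hence "AE w in P. exp (c * A w) = 0" using integral_nonneg_eq_0_iff_AE[OF i] by auto
    hence "AE w in P. False" by simp
    thus False by simp
  qed
  ultimately show ?thesis by linarith
qed

lemma m_lower: "(\<integral>w. exp (- \<bar>b\<bar> * A w) \<partial>P) \<le> m b"
  unfolding m_def
proof (rule integral_mono[OF _ intZ])
  show "integrable P (\<lambda>w. exp (- \<bar>b\<bar> * A w))"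
  proof (rule Bochner_Integration.integrable_bound[OF intZ[of b]])
    show "(\<lambda>w. exp (- \<bar>b\<bar> * A w)) \<in> borel_measurable P" by measurable
    show "AE w in P. norm (exp (- \<bar>b\<bar> * A w)) \<le> norm (Z b w)"
      using Z_lower Z_pos by (auto intro!: AE_I2 simp: less_imp_le)
  qed
  show "exp (- \<bar>b\<bar> * A w) \<le> Z b w" for w using Z_lower by simp
qed

lemma m_pos: "0 < m b"
  using m_lower[of b] int_pos[of "- \<bar>b\<bar>"] by linarith

lemma m_upper: "m b \<le> (\<integral>w. exp (\<bar>b\<bar> * A w) \<partial>P)"
  unfolding m_def by (rule integral_mono[OF intZ Aint]) (auto intro: Z_upper)

lemma m'_upper: "\<bar>m' b\<bar> \<le> (\<integral>w. A w * exp (\<bar>b\<bar> * A w) \<partial>P)"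
proof -
  have iA: "integrable P (\<lambda>w. A w * exp (\<bar>b\<bar> * A w))"
  proof (rule Bochner_Integration.integrable_bound[OF Aint[of "\<bar>b\<bar> + 1"]])
    show "(\<lambda>w. A w * exp (\<bar>b\<bar> * A w)) \<in> borel_measurable P" by measurable
    show "AE w in P. norm (A w * exp (\<bar>b\<bar> * A w)) \<le> norm (exp ((\<bar>b\<bar> + 1) * A w))"
      using bnd1[of "A _" "\<bar>b\<bar>"] Ann by (auto intro!: AE_I2)
  qed simp
  have "\<bar>m' b\<bar> \<le> (\<integral>w. \<bar>Z' b w\<bar> \<partial>P)" unfolding m'_def by (rule integral_abs_bound)
  also have "\<dots> \<le> (\<integral>w. A w * exp (\<bar>b\<bar> * A w) \<partial>P)"
  proof (rule integral_mono[OF _ iA])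
    show "integrable P (\<lambda>w. \<bar>Z' b w\<bar>)" using intZ' by auto
    fix w
    have "\<bar>Z' b w\<bar> \<le> A w * Z b w" by (rule Z'_bound)
    also have "\<dots> \<le> A w * exp (\<bar>b\<bar> * A w)" by (intro mult_left_mono Z_upper Ann)
    finally show "\<bar>Z' b w\<bar> \<le> A w * exp (\<bar>b\<bar> * A w)" .
  qed
  finally show ?thesis .
qed

lemma m'_mono: "mono m'"
proof (rule monoI)
  fix a b :: real assume ab: "a \<le> b"
  have key: "y * exp (a * y) \<le> y * exp (b * y)" for y :: real
  proof (cases "0 \<le> y")
    case True
    thus ?thesis using ab by (intro mult_left_mono) (auto intro: mult_right_mono)
  next
    case False
    hence "b * y \<le> a * y" using ab by (intro mult_right_mono_neg) auto
    thus ?thesis using False by (intro mult_left_mono_neg) auto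
  qed
  show "m' a \<le> m' b" unfolding m'_def
  proof (rule integral_mono[OF intZ' intZ'])
    fix w
    show "Z' a w \<le> Z' b w" unfolding Z'_def
      by (intro sum_mono mult_left_mono[OF key] pnn)
  qed
qed


lemma int_negexp: "c \<le> 0 \<Longrightarrow> integrable P (\<lambda>w. exp (c * A w))"
proof (rule Bochner_Integration.integrable_bound[OF Aint[of 0]])
  assume c: "c \<le> 0"
  show "(\<lambda>w. exp (c * A w)) \<in> borel_measurable P" by measurable
  show "AE w in P. norm (exp (c * A w)) \<le> norm (exp (0 * A w))"
    using c Ann by (auto intro!: AE_I2 simp: mult_nonpos_nonneg)
qed simp

lemma iAexp: "0 \<le> c \<Longrightarrow> integrable P (\<lambda>w. A w * exp (c * A w))"
proof (rule Bochner_Integration.integrable_bound[OF Aint[of "c + 1"]])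
  assume c: "0 \<le> c"
  show "(\<lambda>w. A w * exp (c * A w)) \<in> borel_measurable P" by measurable
  show "AE w in P. norm (A w * exp (c * A w)) \<le> norm (exp ((c + 1) * A w))"
    using bnd1[of "A _" c] Ann c by (auto intro!: AE_I2)
qed simp

lemma ln_deriv: "deriv (\<lambda>b. ln (Z b w / m b)) b = Z' b w / Z b w - m' b / m b"
proof -
  have eq: "(\<lambda>b. ln (Z b w / m b)) = (\<lambda>b. ln (Z b w) - ln (m b))"
  proof
    fix b show "ln (Z b w / m b) = ln (Z b w) - ln (m b)" using Z_pos[of b w] m_pos[of b] by (rule ln_divide_pos)
  qed
  have "((\<lambda>b. ln (Z b w) - ln (m b)) has_field_derivative (Z' b w / Z b w - m' b / m b)) (at b)"
    by (rule derivative_eq_intros Z_deriv m_deriv | simp add: Z_pos m_pos field_simps)+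
  thus ?thesis unfolding eq by (rule DERIV_imp_deriv)
qed

lemma Zc: "continuous_on UNIV (\<lambda>b. Z b w)"
  unfolding Z_def by (intro continuous_intros)
lemma Z'c: "continuous_on UNIV (\<lambda>b. Z' b w)"
  unfolding Z'_def by (intro continuous_intros)
lemma mc: "continuous_on UNIV m"
  by (meson DERIV_isCont m_deriv continuous_at_imp_continuous_on)

lemma meas_b[measurable]:
  "(\<lambda>b. Z b w) \<in> borel_measurable borel" "(\<lambda>b. Z' b w) \<in> borel_measurable borel"
  "m \<in> borel_measurable borel" "m' \<in> borel_measurable borel"
  by (auto intro: borel_measurable_continuous_onI Zc Z'c mc borel_measurable_mono m'_mono)

lemma to_restr: "f \<in> borel_measurable borel \<Longrightarrow> f \<in> borel_measurable (restrict_space lborel {0..T})"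
  by (rule measurable_restrict_space1) (simp add: measurable_cong_sets[OF sets_lborel refl])

lemma final:
  assumes T: "0 \<le> T"
  shows "(\<integral>\<^sup>+w. (e2ennreal (tnorm T (\<lambda>b. 1 / (Z b w / m b)))) ^ 2 \<partial>P) < \<infinity> \<and>
         (\<integral>\<^sup>+w. (e2ennreal (tnorm T (\<lambda>b. deriv (\<lambda>b. ln (Z b w / m b)) b))) ^ 2 \<partial>P) < \<infinity>"
proof -
  define M1 where "M1 = (\<integral>w. exp (T * A w) \<partial>P)"
  define M2 where "M2 = (\<integral>w. A w * exp (T * A w) \<partial>P)"
  define m0 where "m0 = (\<integral>w. exp (- T * A w) \<partial>P)"
  define K where "K = M1 + 1 + M2 / m0"
  define G where "G w = K * exp ((T + 1) * A w)" for w
  have m0: "0 < m0" unfolding m0_def by (rule int_pos)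
  have M2: "0 \<le> M2" unfolding M2_def using Ann by (simp add: integral_nonneg_AE)
  have M1: "0 \<le> M1" unfolding M1_def by (simp add: integral_nonneg_AE)
  have K: "0 \<le> K" unfolding K_def using m0 M1 M2 by simp
  have bT: "\<bar>b\<bar> \<le> T" if "b \<in> {0..T}" for b using that by auto
  have mup: "m b \<le> M1" if "b \<in> {0..T}" for b
  proof -
    have "m b \<le> (\<integral>w. exp (\<bar>b\<bar> * A w) \<partial>P)" by (rule m_upper)
    also have "\<dots> \<le> M1" unfolding M1_def
      using bT[OF that] Ann T by (intro integral_mono Aint) (auto intro: mult_right_mono)
    finally show ?thesis .
  qed
  have mlo: "m0 \<le> m b" if "b \<in> {0..T}" for b
  proof -
    have "m0 \<le> (\<integral>w. exp (- \<bar>b\<bar> * A w) \<partial>P)" unfolding m0_def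
    proof (rule integral_mono)
      show "integrable P (\<lambda>w. exp (- T * A w))" "integrable P (\<lambda>w. exp (- \<bar>b\<bar> * A w))"
        using T int_negexp[of "- T"] int_negexp[of "- \<bar>b\<bar>"] by auto
      show "exp (- T * A w) \<le> exp (- \<bar>b\<bar> * A w)" for w
        using bT[OF that] Ann[of w] by (auto intro: mult_right_mono)
    qed
    also have "\<dots> \<le> m b" by (rule m_lower)
    finally show ?thesis .
  qed
  have m'up: "\<bar>m' b\<bar> \<le> M2" if "b \<in> {0..T}" for b
  proof -
    have "\<bar>m' b\<bar> \<le> (\<integral>w. A w * exp (\<bar>b\<bar> * A w) \<partial>P)" by (rule m'_upper)
    also have "\<dots> \<le> M2" unfolding M2_def
      using bT[OF that] Ann T
      by (intro integral_mono iAexp mult_left_mono) (auto intro: mult_right_mono)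
    finally show ?thesis .
  qed
  have Zinv: "1 / Z b w \<le> exp (T * A w)" if "b \<in> {0..T}" for b w
  proof -
    have "exp (- (T * A w)) \<le> exp (- (\<bar>b\<bar> * A w))"
      using bT[OF that] Ann[of w] by (auto intro: mult_right_mono)
    also have "\<dots> \<le> Z b w" by (rule Z_lower)
    finally have "exp (- (T * A w)) \<le> Z b w" .
    thus ?thesis using Z_pos[of b w] by (simp add: exp_minus field_simps)
  qed
  have e1: "1 \<le> exp ((T + 1) * A w)" for w using Ann[of w] T by simp
  have e2: "exp (T * A w) \<le> exp ((T + 1) * A w)" for w using Ann[of w] T by (simp add: algebra_simps)
  have e3: "A w \<le> exp ((T + 1) * A w)" for w
  proof -
    have "A w \<le> exp (A w)" using exp_ge_add_one_self[of "A w"] by linarith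
    also have "\<dots> \<le> exp ((T + 1) * A w)" using Ann[of w] T by (simp add: algebra_simps)
    finally show ?thesis .
  qed
  have B1: "\<bar>1 / (Z b w / m b)\<bar> \<le> G w" if "b \<in> {0..T}" for b w
  proof -
    have "\<bar>1 / (Z b w / m b)\<bar> = m b * (1 / Z b w)" using Z_pos[of b w] m_pos[of b] by simp
    also have "\<dots> \<le> M1 * exp (T * A w)"
      using mup[OF that] Zinv[OF that] m_pos[of b] Z_pos[of b w] M1
      by (intro mult_mono) auto
    also have "\<dots> \<le> K * exp ((T + 1) * A w)"
      using e2[of w] M1 K unfolding K_def using m0 M2 by (intro mult_mono) auto
    finally show ?thesis unfolding G_def .
  qed
  have B2: "\<bar>deriv (\<lambda>b. ln (Z b w / m b)) b\<bar> \<le> G w" if "b \<in> {0..T}" for b w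
  proof -
    define E where "E = exp ((T + 1) * A w)"
    have E0: "0 \<le> E" unfolding E_def by simp
    have "\<bar>deriv (\<lambda>b. ln (Z b w / m b)) b\<bar> \<le> \<bar>Z' b w / Z b w\<bar> + \<bar>m' b / m b\<bar>"
      unfolding ln_deriv by (rule abs_triangle_ineq4)
    moreover have t1: "\<bar>Z' b w / Z b w\<bar> \<le> A w"
    proof -
      have "\<bar>Z' b w / Z b w\<bar> = \<bar>Z' b w\<bar> / Z b w" using Z_pos[of b w] by simp
      also have "\<dots> \<le> A w" using Z'_bound[of b w] by (subst pos_divide_le_eq[OF Z_pos]) (simp add: mult_ac)
      finally show ?thesis .
    qed
    moreover have t2: "\<bar>m' b / m b\<bar> \<le> M2 / m0"
    proof -
      have "\<bar>m' b / m b\<bar> = \<bar>m' b\<bar> / m b" using m_pos[of b] by simp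
      also have "\<dots> \<le> M2 / m0" using m'up[OF that] mlo[OF that] m0 M2
        by (intro frac_le) auto
      finally show ?thesis .
    qed
    ultimately have "\<bar>deriv (\<lambda>b. ln (Z b w / m b)) b\<bar> \<le> A w + M2 / m0" by linarith
    also have "A w + M2 / m0 \<le> E + M2 / m0 * E"
    proof (rule add_mono)
      show "A w \<le> E" unfolding E_def by (rule e3)
      have "M2 / m0 * 1 \<le> M2 / m0 * E" using e1[of w] M2 m0 unfolding E_def
        by (intro mult_left_mono) auto
      thus "M2 / m0 \<le> M2 / m0 * E" by simp
    qed
    also have "\<dots> \<le> K * E"
    proof -
      have "K * E = M1 * E + (E + M2 / m0 * E)" unfolding K_def by (simp add: distrib_right)
      moreover have "0 \<le> M1 * E" using M1 E0 by simp
      ultimately show ?thesis by linarith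
    qed
    finally show ?thesis unfolding G_def E_def .
  qed
  have Gint: "integrable P (\<lambda>w. (G w) ^ 2)"
  proof -
    have "(\<lambda>w. (G w) ^ 2) = (\<lambda>w. K ^ 2 * exp (2 * (T + 1) * A w))"
      unfolding G_def by (auto simp: power_mult_distrib exp_double[symmetric] mult_ac)
    moreover have "integrable P (\<lambda>w. K ^ 2 * exp (2 * (T + 1) * A w))"
      using T by (intro integrable_mult_right Aint) auto
    ultimately show ?thesis by simp
  qed
  have fin: "(\<integral>\<^sup>+w. (e2ennreal (tnorm T (f w))) ^ 2 \<partial>P) < \<infinity>"
    if fm: "\<And>w. (\<lambda>b. ereal \<bar>f w b\<bar>) \<in> borel_measurable (restrict_space lborel {0..T})"
      and fb: "\<And>w b. b \<in> {0..T} \<Longrightarrow> \<bar>f w b\<bar> \<le> G w" for f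
  proof -
    have "(\<integral>\<^sup>+w. (e2ennreal (tnorm T (f w))) ^ 2 \<partial>P) \<le> (\<integral>\<^sup>+w. ennreal ((G w) ^ 2) \<partial>P)"
    proof (rule nn_integral_mono)
      fix w
      have "tnorm T (f w) \<le> ereal (G w)" unfolding tnorm_def
        by (rule esssup_I[OF fm]) (auto intro!: AE_I2 simp: space_restrict_space fb)
      hence "e2ennreal (tnorm T (f w)) \<le> ennreal (G w)"
        using e2ennreal_mono e2ennreal_ereal by metis
      hence "(e2ennreal (tnorm T (f w))) ^ 2 \<le> (ennreal (G w)) ^ 2" by (rule power_mono) simp
      also have "\<dots> = ennreal ((G w) ^ 2)" using K by (simp add: G_def ennreal_power)
      finally show "(e2ennreal (tnorm T (f w))) ^ 2 \<le> ennreal ((G w) ^ 2)" .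
    qed
    also have "\<dots> = ennreal (\<integral>w. (G w) ^ 2 \<partial>P)"
      by (rule nn_integral_eq_integral[OF Gint]) simp
    also have "\<dots> < \<infinity>" by simp
    finally show ?thesis .
  qed
  show ?thesis
  proof
    show "(\<integral>\<^sup>+w. (e2ennreal (tnorm T (\<lambda>b. 1 / (Z b w / m b)))) ^ 2 \<partial>P) < \<infinity>"
    proof (rule fin[where f="\<lambda>w b. 1 / (Z b w / m b)"])
      fix w
      show "(\<lambda>b. ereal \<bar>1 / (Z b w / m b)\<bar>) \<in> borel_measurable (restrict_space lborel {0..T})"
        by (rule to_restr) measurable
    next
      fix w b assume "b \<in> {0..T}" thus "\<bar>1 / (Z b w / m b)\<bar> \<le> G w" by (rule B1)
    qed
    show "(\<integral>\<^sup>+w. (e2ennreal (tnorm T (\<lambda>b. deriv (\<lambda>b. ln (Z b w / m b)) b))) ^ 2 \<partial>P) < \<infinity>"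
    proof (rule fin[where f="\<lambda>w b. deriv (\<lambda>b. ln (Z b w / m b)) b"])
      fix w
      show "(\<lambda>b. ereal \<bar>deriv (\<lambda>b. ln (Z b w / m b)) b\<bar>) \<in> borel_measurable (restrict_space lborel {0..T})"
        unfolding ln_deriv by (rule to_restr) measurable
    next
      fix w b assume "b \<in> {0..T}" thus "\<bar>deriv (\<lambda>b. ln (Z b w / m b)) b\<bar> \<le> G w" by (rule B2)
    qed
  qed
qed

end


lemma exp_abs_le: "exp (c * \<bar>x\<bar>) \<le> exp (c * x) + exp (- (c * x))" for c x :: real
  by (cases "0 \<le> x") (auto simp: add_increasing add_increasing2)

lemma ab_le: "a * b \<le> a ^ 2 + b ^ 2" if "0 \<le> a" "0 \<le> b" for a b :: real
proof -
  have "0 \<le> (a - b) ^ 2" by simp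
  hence "2 * (a * b) \<le> a ^ 2 + b ^ 2" by (simp add: power2_diff algebra_simps)
  moreover have "0 \<le> a * b" using that by simp
  ultimately show ?thesis by linarith
qed

lemma int_sumabs:
  fixes P :: "('v \<Rightarrow> real) measure" and F :: "'v set"
  assumes prob: "prob_space P"
    and cm[measurable]: "\<And>v. (\<lambda>\<omega>. \<omega> v) \<in> borel_measurable P"
    and ie: "\<And>v c. integrable P (\<lambda>\<omega>. exp (c * \<omega> v))"
    and fin: "finite F"
  shows "integrable P (\<lambda>\<omega>::'v \<Rightarrow> real. exp (c * (\<Sum>v\<in>F. \<bar>\<omega> v\<bar>)))"
  using fin
proof (induction F arbitrary: c rule: finite_induct)
  case empty
  interpret prob_space P by (rule prob)
  show ?case by simp
next
  case (insert v F)
  let ?R = "\<lambda>\<omega>::'v \<Rightarrow> real. (\<Sum>v\<in>F. \<bar>\<omega> v\<bar>)"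
  have i: "integrable P (\<lambda>\<omega>. (exp (2 * c * \<omega> v) + exp ((- 2 * c) * \<omega> v)) + exp ((2 * c) * ?R \<omega>))"
    by (intro Bochner_Integration.integrable_add ie insert.IH)
  show ?case
  proof (rule Bochner_Integration.integrable_bound[OF i])
    have [measurable]: "?R \<in> borel_measurable P" by measurable
    show "(\<lambda>\<omega>. exp (c * (\<Sum>v\<in>insert v F. \<bar>\<omega> v\<bar>))) \<in> borel_measurable P" by measurable
    show "AE \<omega> in P. norm (exp (c * (\<Sum>v\<in>insert v F. \<bar>\<omega> v\<bar>)))
          \<le> norm ((exp (2 * c * \<omega> v) + exp ((- 2 * c) * \<omega> v)) + exp ((2 * c) * ?R \<omega>))"
    proof (rule AE_I2)
      fix \<omega> :: "'v \<Rightarrow> real"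
      have "exp (c * (\<Sum>v\<in>insert v F. \<bar>\<omega> v\<bar>)) = exp (c * \<bar>\<omega> v\<bar>) * exp (c * ?R \<omega>)"
        using insert by (simp add: distrib_left exp_add)
      also have "\<dots> \<le> (exp (c * \<bar>\<omega> v\<bar>)) ^ 2 + (exp (c * ?R \<omega>)) ^ 2" by (rule ab_le) auto
      also have "\<dots> = exp ((2 * c) * \<bar>\<omega> v\<bar>) + exp ((2 * c) * ?R \<omega>)"
        by (simp add: exp_double[symmetric] mult_ac)
      also have "\<dots> \<le> (exp (2 * c * \<omega> v) + exp ((- 2 * c) * \<omega> v)) + exp ((2 * c) * ?R \<omega>)"
        using exp_abs_le[of "2 * c" "\<omega> v"] by simp
      finally show "norm (exp (c * (\<Sum>v\<in>insert v F. \<bar>\<omega> v\<bar>)))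
          \<le> norm ((exp (2 * c * \<omega> v) + exp ((- 2 * c) * \<omega> v)) + exp ((2 * c) * ?R \<omega>))"
        by (simp add: add_nonneg_nonneg)
    qed
  qed
qed


theorem lemmaB2:
  fixes \<mu> :: "(int ^ ('d::finite)) pmf" and P :: "'d config measure"
    and C g T :: real and N :: nat
  assumes "CARD('d) \<ge> 3"
    and "finite (set_pmf \<mu>)"
    and "prob_space P" and "sets P = sets Omega"
    and "\<forall>v \<beta>. integrable P (\<lambda>\<omega>. exp (\<beta> * \<omega> v))"
    and "markov_field P"
    and "C > 0" and "g > 0"
    and "\<exists>K. cond_law_family P K \<and> (TC C g K \<or> TCG C g K)"
    and "T > 0"
  shows "(\<integral>\<^sup>+\<omega>. (e2ennreal (tnorm T (\<lambda>\<beta>. 1 / Wpart \<mu> P N \<beta> \<omega>))) ^ 2 \<partial>P) < \<infinity> \<and>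
         (\<integral>\<^sup>+\<omega>. (e2ennreal (tnorm T (\<lambda>\<beta>. deriv (\<lambda>b. ln (Wpart \<mu> P N b \<omega>)) \<beta>))) ^ 2 \<partial>P) < \<infinity>"
proof -
  define Q where "Q = Pi_pmf {1..N} (0::int ^ 'd) (\<lambda>_. \<mu>)"
  define S where "S = set_pmf Q"
  define h where "h X \<omega> = (\<Sum>k = 1..N. \<omega> (k, \<Sum>j = 1..k. X j))"
    for X :: "nat \<Rightarrow> int ^ 'd" and \<omega> :: "'d config"
  define Sites where "Sites = (\<lambda>(X :: nat \<Rightarrow> int ^ 'd, k). (k, \<Sum>j = 1..k. X j)) ` (S \<times> {1..N})"
  define A where "A \<omega> = (\<Sum>v\<in>Sites. \<bar>\<omega> v\<bar>)" for \<omega> :: "'d config"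
  have finS: "finite S"
  proof -
    have "S \<subseteq> PiE_dflt {1..N} 0 (set_pmf \<circ> (\<lambda>_. \<mu>))"
      unfolding S_def Q_def by (rule set_Pi_pmf_subset') simp
    moreover have "finite (PiE_dflt {1..N} (0::int ^ 'd) (set_pmf \<circ> (\<lambda>_. \<mu>)))"
      using assms(2) by (intro finite_PiE_dflt) auto
    ultimately show ?thesis by (rule finite_subset)
  qed
  have finSites: "finite Sites" unfolding Sites_def using finS by simp
  have cm[measurable]: "(\<lambda>\<omega>. \<omega> v) \<in> borel_measurable P" for v :: "'d site"
  proof -
    have "(\<lambda>\<omega>. \<omega> v) \<in> borel_measurable Omega"
      unfolding Omega_def by (rule measurable_component_singleton) simp
    thus ?thesis by (subst measurable_cong_sets[OF assms(4) refl])
  qed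
  have hm: "h X \<in> borel_measurable P" for X unfolding h_def by measurable
  have Am: "A \<in> borel_measurable P" unfolding A_def by measurable
  have hA: "\<bar>h X w\<bar> \<le> A w" if X: "X \<in> S" for X w
  proof -
    have inj: "inj_on (\<lambda>k. (k, \<Sum>j = 1..k. X j)) {1..N}" by (rule inj_onI) simp
    have "\<bar>h X w\<bar> \<le> (\<Sum>k = 1..N. \<bar>w (k, \<Sum>j = 1..k. X j)\<bar>)" unfolding h_def by (rule sum_abs)
    also have "\<dots> = (\<Sum>v\<in>(\<lambda>k. (k, \<Sum>j = 1..k. X j)) ` {1..N}. \<bar>w v\<bar>)"
      by (subst sum.reindex[OF inj]) simp
    also have "\<dots> \<le> A w" unfolding A_def
      by (rule sum_mono2[OF finSites]) (use X in \<open>auto simp: Sites_def\<close>)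
    finally show ?thesis .
  qed
  have Aint: "integrable P (\<lambda>w. exp (c * A w))" for c
    unfolding A_def using assms(3,5) finSites by (intro int_sumabs) auto
  interpret lapl P S "pmf Q" h A
  proof (rule lapl.intro)
    show "prob_space P" by (rule assms(3))
    show "finite S" by (rule finS)
    show "0 \<le> pmf Q x" for x by simp
    show "(\<Sum>x\<in>S. pmf Q x) = 1" unfolding S_def using finS S_def by (intro sum_pmf_eq_1) auto
    show "h x \<in> borel_measurable P" for x by (rule hm)
    show "A \<in> borel_measurable P" by (rule Am)
    show "0 \<le> A w" for w unfolding A_def by (rule sum_nonneg) simp
    show "\<bar>h x w\<bar> \<le> A w" if "x \<in> S" for x w using that by (rule hA)
    show "integrable P (\<lambda>w. exp (c * A w))" for c by (rule Aint)
  qed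
  have Zeq: "Zpart \<mu> N b w = Z b w" for b w
    unfolding Zpart_def Z_def Q_def[symmetric]
    using finS by (subst integral_measure_pmf[of S]) (auto simp: S_def h_def)
  have Weq: "Wpart \<mu> P N = (\<lambda>b w. Z b w / m b)"
    by (intro ext) (simp add: Wpart_def Zeq m_def)
  show ?thesis using final[of T] assms(10) unfolding Weq by simp
qed

end
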